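(* For every integer $a \ge 2$ and every $b \in \mathbb{N}$, $R_\mathrm{cyc}(C_a^\mathrm{mon}, P_b^\mathrm{mon}) = 1 + (a-1)(b-1)$.
   Context: All graphs are finite, simple and undirected, and a graph of order $n$ has vertex set $\{0,1,\ldots,n-1\}$; $K_n$ is the complete graph on $\{0,\ldots,n-1\}$. A $2$-edge-coloring of $K_n$ assigns each edge a color in $\{1,2\}$. For a graph $H$ and such a coloring, an embedding of $H$ in color $j$ is an injective map $\varphi\colon V(H)\to V(K_n)$ such that for every edge $uv$ of $H$ the edge $\{\varphi(u),\varphi(v)\}$ has color $j$; it is increasing up to a cyclic permutation if there exists $t\in V(H)$ such that $(\varphi(t),\ldots,\varphi(|H|-1),\varphi(0),\ldots,\varphi(t-1))$ is increasing. The cyclic Ramsey number $R_\mathrm{cyc}(H_1,H_2)$ is the smallest $n$ such that every $2$-edge-coloring of $K_n$ admits an embedding of $H_1$ in color $1$ or of $H_2$ in color $2$ that is increasing up to a cyclic permutation. The monotone path $P_n^\mathrm{mon}$ has edges $\{i,i+1\}$, $0\le i\le n-2$. For $n\ge3$ the monotone cycle $C_n^\mathrm{mon}$ is $P_n^\mathrm{mon}$ plus the edge $\{0,n-1\}$; by convention $C_2^\mathrm{mon}=K_2$. *)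

theory Defs
  imports Main
begin

text \<open>A graph of order n on vertex set {0..<n}: a pair (order, edge set), where
  edges are 2-element subsets of {0..<n}.\<close>
type_synonym graph = "nat \<times> nat set set"

definition Pmon :: "nat \<Rightarrow> graph" where
  "Pmon n = (n, {{i, i + 1} | i. i + 2 \<le> n})"

text \<open>Monotone cycle, for n \<ge> 2 (C_2 = K_2 by convention).\<close>
definition Cmon :: "nat \<Rightarrow> graph" where
  "Cmon n = (if n = 2 then (2, {{0, 1}})
             else (n, {{i, i + 1} | i. i + 2 \<le> n} \<union> {{0, n - 1}}))"

definition two_coloring :: "nat \<Rightarrow> (nat set \<Rightarrow> nat) \<Rightarrow> bool" where
  "two_coloring n c \<longleftrightarrow> (\<forall>i<n. \<forall>j<n. i \<noteq> j \<longrightarrow> c {i, j} \<in> {1, 2})"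

definition embedding_in_color ::
  "graph \<Rightarrow> nat \<Rightarrow> (nat set \<Rightarrow> nat) \<Rightarrow> nat \<Rightarrow> (nat \<Rightarrow> nat) \<Rightarrow> bool" where
  "embedding_in_color H n c j \<phi> \<longleftrightarrow>
     inj_on \<phi> {0..<fst H} \<and> \<phi> ` {0..<fst H} \<subseteq> {0..<n} \<and>
     (\<forall>u v. {u, v} \<in> snd H \<longrightarrow> c {\<phi> u, \<phi> v} = j)"

definition cyc_increasing :: "graph \<Rightarrow> (nat \<Rightarrow> nat) \<Rightarrow> bool" where
  "cyc_increasing H \<phi> \<longleftrightarrow>
     (\<exists>t < fst H. \<forall>k. k + 1 < fst H \<longrightarrow>
        \<phi> ((t + k) mod fst H) < \<phi> ((t + k + 1) mod fst H))"

definition cyc_ramsey_prop :: "graph \<Rightarrow> graph \<Rightarrow> nat \<Rightarrow> bool" where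
  "cyc_ramsey_prop H1 H2 n \<longleftrightarrow>
     (\<forall>c. two_coloring n c \<longrightarrow>
        (\<exists>\<phi>. embedding_in_color H1 n c 1 \<phi> \<and> cyc_increasing H1 \<phi>) \<or>
        (\<exists>\<phi>. embedding_in_color H2 n c 2 \<phi> \<and> cyc_increasing H2 \<phi>))"

definition R_cyc :: "graph \<Rightarrow> graph \<Rightarrow> nat" where
  "R_cyc H1 H2 = (LEAST n. cyc_ramsey_prop H1 H2 n)"

end

theory Submission
  imports Defs
begin

function Lp :: "(nat set \<Rightarrow> nat) \<Rightarrow> nat \<Rightarrow> nat" where
  "Lp c v = Suc (Max (insert 0 (set (map (\<lambda>u. if c {u, v} = 2 then Lp c u else 0) [0..<v]))))"
  by auto
termination by (relation "measure snd") auto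

declare Lp.simps [simp del]

lemma Lp_pos: "Lp c v \<ge> 1"
  by (subst Lp.simps) simp

lemma Lp_gt:
  assumes "u < v" "c {u, v} = 2"
  shows "Lp c u < Lp c v"
proof -
  have "Lp c u \<in> set (map (\<lambda>u. if c {u, v} = 2 then Lp c u else 0) [0..<v])"
    using assms by force
  hence "Lp c u \<le> Max (insert 0 (set (map (\<lambda>u. if c {u, v} = 2 then Lp c u else 0) [0..<v])))"
    by (intro Max_ge) auto
  thus ?thesis by (subst (2) Lp.simps) simp
qed

lemma Lp_pred:
  assumes "Lp c v \<ge> 2"
  shows "\<exists>u<v. c {u, v} = 2 \<and> Lp c u = Lp c v - 1"
proof -
  let ?S = "insert 0 (set (map (\<lambda>u. if c {u, v} = 2 then Lp c u else 0) [0..<v]))"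
  have e: "Lp c v = Suc (Max ?S)" by (subst Lp.simps) simp
  have "Max ?S \<in> ?S" by (intro Max_in) auto
  moreover have "Max ?S \<noteq> 0" using e assms by simp
  ultimately have "Max ?S \<in> set (map (\<lambda>u. if c {u, v} = 2 then Lp c u else 0) [0..<v])" by simp
  then obtain u where "u < v" "(if c {u, v} = 2 then Lp c u else 0) = Max ?S" by auto
  with \<open>Max ?S \<noteq> 0\<close> e show ?thesis by (auto split: if_splits)
qed

lemma Lp_path:
  "1 \<le> k \<Longrightarrow> k \<le> Lp c v \<Longrightarrow> \<exists>\<phi>. \<phi> (k - 1) = v \<and>
     (\<forall>i. i + 1 < k \<longrightarrow> \<phi> i < \<phi> (i + 1) \<and> c {\<phi> i, \<phi> (i + 1)} = 2)"
proof (induction v arbitrary: k rule: less_induct)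
  case (less v)
  show ?case
  proof (cases "k = 1")
    case True
    then show ?thesis by (intro exI[of _ "\<lambda>_. v"]) auto
  next
    case False
    with less.prems have k2: "k \<ge> 2" by simp
    then obtain u where u: "u < v" "c {u, v} = 2" "Lp c u = Lp c v - 1"
      using Lp_pred[of c v] less.prems by auto
    have "1 \<le> k - 1" "k - 1 \<le> Lp c u" using k2 u(3) less.prems(2) by auto
    note ex = less.IH[OF u(1) this]
    obtain \<psi> where psi0: "\<psi> (k - 1 - 1) = u \<and>
      (\<forall>i. i + 1 < k - 1 \<longrightarrow> \<psi> i < \<psi> (i + 1) \<and> c {\<psi> i, \<psi> (i + 1)} = 2)"
      using ex ..
    note psi = conjunct1[OF psi0] conjunct2[OF psi0]
    show ?thesis
    proof (intro exI[of _ "\<psi>(k - 1 := v)"] conjI allI impI)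
      fix i assume i: "i + 1 < k"
      show "(\<psi>(k - 1 := v)) i < (\<psi>(k - 1 := v)) (i + 1)"
        using psi u i k2 by (cases "i + 2 = k") auto
      show "c {(\<psi>(k - 1 := v)) i, (\<psi>(k - 1 := v)) (i + 1)} = 2"
        using psi u i k2 by (cases "i + 2 = k") auto
    qed simp
  qed
qed

lemma pigeon:
  assumes "finite A" "\<forall>x\<in>A. f x \<in> B" "finite B" "card A > card B * m"
  shows "\<exists>y\<in>B. card {x\<in>A. f x = y} > m"
proof (rule ccontr)
  assume "\<not> ?thesis"
  hence le: "\<forall>y\<in>B. card {x\<in>A. f x = y} \<le> m" by auto
  have "A = (\<Union>y\<in>B. {x\<in>A. f x = y})" using assms(2) by auto
  hence "card A \<le> (\<Sum>y\<in>B. card {x\<in>A. f x = y})"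
    using card_UN_le[OF assms(3), of "\<lambda>y. {x\<in>A. f x = y}"] by simp
  also have "\<dots> \<le> (\<Sum>y\<in>B. m)" using le by (intro sum_mono) auto
  finally show False using assms(4) by simp
qed

lemma two_elem: "{u, v} = {x, y} \<Longrightarrow> (u = x \<and> v = y) \<or> (u = y \<and> v = x)"
  by (simp add: doubleton_eq_iff)

lemma Cmon_snd2: "snd (Cmon 2) = {{0, 1}}"
  by (simp add: Cmon_def)

lemma Cmon_snd: "a \<noteq> 2 \<Longrightarrow> snd (Cmon a) = {{i, i + 1} | i. i + 2 \<le> a} \<union> {{0, a - 1}}"
  by (simp add: Cmon_def)

lemma Cmon_edge:
  assumes "a \<ge> 2" "{u, v} \<in> snd (Cmon a)"
  shows "u < a \<and> v < a \<and> u \<noteq> v"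
proof (cases "a = 2")
  case True
  then have "{u, v} = {0, 1}" using assms(2) Cmon_snd2 by simp
  then have "(u = 0 \<and> v = 1) \<or> (u = 1 \<and> v = 0)" by (rule two_elem)
  then show ?thesis using True by linarith
next
  case False
  then have "{u, v} \<in> {{i, i + 1} | i. i + 2 \<le> a} \<or> {u, v} = {0, a - 1}"
    using assms(2) unfolding Cmon_snd[OF False] by (simp only: Un_iff singleton_iff)
  then show ?thesis
  proof
    assume "{u, v} \<in> {{i, i + 1} | i. i + 2 \<le> a}"
    then obtain i where i: "{u, v} = {i, i + 1}" "i + 2 \<le> a" by blast
    from i(1) have "(u = i \<and> v = i + 1) \<or> (u = i + 1 \<and> v = i)" by (rule two_elem)
    then show ?thesis using i(2) by linarith
  next
    assume "{u, v} = {0, a - 1}"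
    then have "(u = 0 \<and> v = a - 1) \<or> (u = a - 1 \<and> v = 0)" by (rule two_elem)
    then show ?thesis using assms(1) by linarith
  qed
qed

lemma Cmon_has_edge:
  assumes "a \<ge> 2" "i < a"
  shows "{i, (i + 1) mod a} \<in> snd (Cmon a)"
proof (cases "a = 2")
  case True
  then have "i = 0 \<or> i = 1" using assms by linarith
  then have "{i, (i + 1) mod a} = {0, 1}"
  proof
    assume "i = 0" then show ?thesis using True by simp
  next
    assume "i = 1" then have "{i, (i + 1) mod a} = {1, 0}" using True by simp
    also have "\<dots> = {0, 1}" by (rule insert_commute)
    finally show ?thesis .
  qed
  then show ?thesis using True Cmon_snd2 by simp
next
  case False
  show ?thesis
  proof (cases "i + 1 < a")
    case True
    then have "{i, (i + 1) mod a} = {i, i + 1}" by simp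
    moreover have "{i, i + 1} \<in> {{j, j + 1} | j. j + 2 \<le> a}"
      by (rule CollectI, rule exI[of _ i]) (use True in simp)
    ultimately show ?thesis unfolding Cmon_snd[OF False] by simp
  next
    case f2: False
    then have ia: "i = a - 1" using assms by simp
    then have "(i + 1) mod a = 0" using assms by simp
    then have "{i, (i + 1) mod a} = {a - 1, 0}" using ia by simp
    also have "\<dots> = {0, a - 1}" by (rule insert_commute)
    finally show ?thesis unfolding Cmon_snd[OF False] by simp
  qed
qed

lemma inj_from_mono:
  fixes f :: "nat \<Rightarrow> 'b::linorder" and n :: nat
  assumes "\<And>i j. i < j \<Longrightarrow> j < n \<Longrightarrow> f i < f j"
  shows "inj_on f {0..<n}"
proof (rule inj_onI)
  fix i j assume ij: "i \<in> {0..<n}" "j \<in> {0..<n}" "f i = f j"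
  show "i = j"
  proof (cases i j rule: linorder_cases)
    case less then show ?thesis using assms[of i j] ij by auto
  next
    case greater then show ?thesis using assms[of j i] ij by auto
  qed
qed

lemma cyc_inc0:
  fixes f :: "nat \<Rightarrow> 'b::linorder" and n :: nat
  assumes "0 < n" "\<And>k. k + 1 < n \<Longrightarrow> f k < f (k + 1)"
  shows "\<exists>t<n. \<forall>k. k + 1 < n \<longrightarrow> f ((t + k) mod n) < f ((t + k + 1) mod n)"
proof (intro exI[of _ 0] conjI allI impI)
  fix k assume k: "k + 1 < n"
  then have "(0 + k) mod n = k" "(0 + k + 1) mod n = k + 1" by auto
  then show "f ((0 + k) mod n) < f ((0 + k + 1) mod n)" using assms(2)[OF k] by simp
qed (use assms in simp)

lemma upper:
  assumes a: "a \<ge> 2" and b: "b \<ge> 1"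
  shows "cyc_ramsey_prop (Cmon a) (Pmon b) (1 + (a - 1) * (b - 1))"
  unfolding cyc_ramsey_prop_def
proof (intro allI impI)
  fix c assume col: "two_coloring (1 + (a - 1) * (b - 1)) c"
  define N where "N = 1 + (a - 1) * (b - 1)"
  have fstC: "fst (Cmon a) = a" by (simp add: Cmon_def)
  have fstP: "fst (Pmon b) = b" by (simp add: Pmon_def)
  show "(\<exists>\<phi>. embedding_in_color (Cmon a) (1 + (a - 1) * (b - 1)) c 1 \<phi> \<and> cyc_increasing (Cmon a) \<phi>) \<or>
        (\<exists>\<phi>. embedding_in_color (Pmon b) (1 + (a - 1) * (b - 1)) c 2 \<phi> \<and> cyc_increasing (Pmon b) \<phi>)"
  proof (cases "\<exists>v<N. Lp c v \<ge> b")
    case True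
    then obtain v where v: "v < N" "Lp c v \<ge> b" by blast
    note ex = Lp_path[OF b v(2)]
    obtain \<phi> where phi0: "\<phi> (b - 1) = v \<and>
      (\<forall>i. i + 1 < b \<longrightarrow> \<phi> i < \<phi> (i + 1) \<and> c {\<phi> i, \<phi> (i + 1)} = 2)"
      using ex ..
    note phi = conjunct1[OF phi0] conjunct2[OF phi0]
    have mono: "\<phi> i < \<phi> j" if "i < j" "j < b" for i j
      using that
    proof (induction j)
      case 0 then show ?case by simp
    next
      case (Suc j)
      then show ?case using phi(2)[rule_format, of j]
        by (cases "i = j") auto
    qed
    have le: "\<phi> i \<le> v" if "i < b" for i
    proof (cases "i = b - 1")
      case False
      hence "i < b - 1" using that by simp
      thus ?thesis using mono[of i "b - 1"] phi(1) b by simp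
    qed (use phi(1) in simp)
    have "embedding_in_color (Pmon b) N c 2 \<phi>"
      unfolding embedding_in_color_def fstP
    proof (intro conjI allI impI)
      show "inj_on \<phi> {0..<b}"
        by (rule inj_from_mono) (rule mono)
      show "\<phi> ` {0..<b} \<subseteq> {0..<N}"
      proof
        fix x assume "x \<in> \<phi> ` {0..<b}"
        then obtain i where "i < b" "x = \<phi> i" by auto
        then show "x \<in> {0..<N}" using le[of i] v(1) by simp
      qed
      fix u w assume "{u, w} \<in> snd (Pmon b)"
      then obtain i where i: "{u, w} = {i, i + 1}" "i + 2 \<le> b" by (auto simp: Pmon_def)
      have ci: "c {\<phi> i, \<phi> (i + 1)} = 2" using phi(2) i(2) by simp
      from i(1) have "(u = i \<and> w = i + 1) \<or> (u = i + 1 \<and> w = i)"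
        by (simp add: doubleton_eq_iff)
      then show "c {\<phi> u, \<phi> w} = 2"
      proof
        assume "u = i \<and> w = i + 1" then show ?thesis using ci by simp
      next
        assume "u = i + 1 \<and> w = i" then show ?thesis using ci by (simp add: insert_commute)
      qed
    qed
    moreover have "cyc_increasing (Pmon b) \<phi>"
      unfolding cyc_increasing_def fstP
      by (rule cyc_inc0) (use b phi(2) in auto)
    ultimately show ?thesis unfolding N_def by blast
  next
    case False
    hence rng: "\<forall>v\<in>{0..<N}. Lp c v \<in> {1..b - 1}" using Lp_pos[of c] by force
    have cardlt: "card {0..<N} > card {1..b - 1} * (a - 1)" by (simp add: N_def mult.commute)
    note pg = pigeon[OF finite_atLeastLessThan rng finite_atLeastAtMost cardlt]
    obtain y where y: "y \<in> {1..b-1}" "card {v\<in>{0..<N}. Lp c v = y} > a - 1"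
      using pg ..
    define S where "S = {v\<in>{0..<N}. Lp c v = y}"
    have finS: "finite S" by (simp add: S_def)
    have cardS: "card S \<ge> a" using y S_def by simp
    have col1: "c {x, z} = 1" if "x \<in> S" "z \<in> S" "x \<noteq> z" for x z
    proof -
      have "c {x, z} \<in> {1, 2}" using col that unfolding two_coloring_def S_def N_def by auto
      moreover have "c {x, z} \<noteq> 2"
      proof
        assume h: "c {x, z} = 2"
        show False
        proof (cases "x < z")
          case True
          then show False using Lp_gt[of x z c] h that S_def by auto
        next
          case False
          then have "z < x" using that by simp
          then show False using Lp_gt[of z x c] h that S_def by (auto simp: insert_commute)
        qed
      qed
      ultimately show ?thesis by auto
    qed
    define xs where "xs = sorted_list_of_set S"
    have lxs: "length xs = card S" and sxs: "sorted_wrt (<) xs" and setxs: "set xs = S"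
      using finS by (auto simp: xs_def)
    define \<phi> where "\<phi> i = xs ! i" for i
    have inS: "\<phi> i \<in> S" if "i < a" for i
      using that cardS lxs setxs unfolding \<phi>_def by (metis nth_mem order_less_le_trans)
    have mono: "\<phi> i < \<phi> j" if "i < j" "j < a" for i j
      using sxs that cardS lxs unfolding \<phi>_def by (simp add: sorted_wrt_iff_nth_less)
    have injp: "inj_on \<phi> {0..<a}"
      by (rule inj_from_mono) (rule mono)
    have "embedding_in_color (Cmon a) N c 1 \<phi>"
      unfolding embedding_in_color_def fstC
    proof (intro conjI allI impI injp)
      show "\<phi> ` {0..<a} \<subseteq> {0..<N}" using inS S_def by auto
      fix u w assume "{u, w} \<in> snd (Cmon a)"
      then have "u < a" "w < a" "u \<noteq> w" using Cmon_edge a by auto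
      then have "\<phi> u \<noteq> \<phi> w" using injp by (auto simp: inj_on_def)
      then show "c {\<phi> u, \<phi> w} = 1" using col1 inS \<open>u < a\<close> \<open>w < a\<close> by blast
    qed
    moreover have "cyc_increasing (Cmon a) \<phi>"
      unfolding cyc_increasing_def fstC
      by (rule cyc_inc0) (use a mono in auto)
    ultimately show ?thesis unfolding N_def by blast
  qed
qed

lemma blk_neq:
  assumes "card ((\<lambda>x. x div k) ` {x, y}) \<noteq> 1"
  shows "x div k \<noteq> y div k"
  using assms by auto

lemma blk_eq:
  assumes "card ((\<lambda>x. x div k) ` {x, y}) = 1"
  shows "x div k = y div k"
proof (rule ccontr)
  assume "x div k \<noteq> y div k"
  then have "card ((\<lambda>x. x div k) ` {x, y}) = 2" by simp
  then show False using assms by simp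
qed

lemma in_block:
  fixes x k :: nat
  assumes "x div k = B" "k > 0"
  shows "x \<in> {B * k..<B * k + k}"
proof -
  have "x = x div k * k + x mod k" by simp
  moreover have "x mod k < k" using assms(2) by simp
  ultimately show ?thesis using assms(1) by (metis atLeastLessThan_iff le_add1 add_less_cancel_left)
qed

lemma lower:
  assumes a: "a \<ge> 2" and b: "b \<ge> 1" and n: "n < 1 + (a - 1) * (b - 1)"
  shows "\<not> cyc_ramsey_prop (Cmon a) (Pmon b) n"
proof -
  define k where "k = b - 1"
  define c :: "nat set \<Rightarrow> nat" where "c S = (if card ((\<lambda>x. x div k) ` S) = 1 then 2 else 1)" for S
  have nM: "n \<le> (a - 1) * k" using n k_def by simp
  have fstC: "fst (Cmon a) = a" by (simp add: Cmon_def)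
  have fstP: "fst (Pmon b) = b" by (simp add: Pmon_def)
  have tc: "two_coloring n c" unfolding two_coloring_def c_def by auto
  have noC: "\<not> (embedding_in_color (Cmon a) n c 1 \<phi> \<and> cyc_increasing (Cmon a) \<phi>)" for \<phi>
  proof
    assume h: "embedding_in_color (Cmon a) n c 1 \<phi> \<and> cyc_increasing (Cmon a) \<phi>"
    then obtain t where t: "t < a"
      "\<forall>j. j + 1 < a \<longrightarrow> \<phi> ((t + j) mod a) < \<phi> ((t + j + 1) mod a)"
      unfolding cyc_increasing_def fstC by blast
    have rng: "\<phi> ` {0..<a} \<subseteq> {0..<n}"
      and edges: "\<forall>u v. {u, v} \<in> snd (Cmon a) \<longrightarrow> c {\<phi> u, \<phi> v} = 1"
      using h unfolding embedding_in_color_def fstC by auto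
    define \<psi> where "\<psi> j = \<phi> ((t + j) mod a)" for j
    have step: "\<psi> j div k < \<psi> (j + 1) div k" if j: "j + 1 < a" for j
    proof -
      have lt: "\<psi> j < \<psi> (j + 1)" using t(2) j unfolding \<psi>_def by (simp add: add.assoc)
      have md: "((t + j) mod a + 1) mod a = (t + (j + 1)) mod a"
        by (simp add: mod_Suc_eq add.assoc)
      have "{(t + j) mod a, ((t + j) mod a + 1) mod a} \<in> snd (Cmon a)"
        using Cmon_has_edge[OF a] a by simp
      then have "c {\<psi> j, \<psi> (j + 1)} = 1" using edges md unfolding \<psi>_def by metis
      then have "card ((\<lambda>x. x div k) ` {\<psi> j, \<psi> (j + 1)}) \<noteq> 1"
      proof (intro notI)
        assume c1: "c {\<psi> j, \<psi> (j + 1)} = 1"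
        assume hc: "card ((\<lambda>x. x div k) ` {\<psi> j, \<psi> (j + 1)}) = 1"
        have "c {\<psi> j, \<psi> (j + 1)} = 2" unfolding c_def by (rule if_P[OF hc])
        then show False using c1 by simp
      qed
      then have "\<psi> j div k \<noteq> \<psi> (j + 1) div k" by (rule blk_neq)
      moreover have "\<psi> j div k \<le> \<psi> (j + 1) div k" using lt by (simp add: div_le_mono)
      ultimately show ?thesis by simp
    qed
    have grow: "j < a \<Longrightarrow> \<psi> 0 div k + j \<le> \<psi> j div k" for j
    proof (induction j)
      case 0 then show ?case by simp
    next
      case (Suc j)
      then show ?case using step[of j] by simp
    qed
    have "(t + (a - 1)) mod a \<in> {0..<a}" using a by simp
    then have "\<phi> ((t + (a - 1)) mod a) \<in> {0..<n}" using rng by blast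
    then have "\<psi> (a - 1) < n" unfolding \<psi>_def by simp
    then have lt: "\<psi> (a - 1) < (a - 1) * k" using nM by simp
    then have "\<psi> (a - 1) div k < a - 1" by (simp add: less_mult_imp_div_less)
    moreover have "a - 1 \<le> \<psi> (a - 1) div k" using grow[of "a - 1"] a by simp
    ultimately show False by simp
  qed
  have noP: "\<not> (embedding_in_color (Pmon b) n c 2 \<phi> \<and> cyc_increasing (Pmon b) \<phi>)" for \<phi>
  proof
    assume h: "embedding_in_color (Pmon b) n c 2 \<phi> \<and> cyc_increasing (Pmon b) \<phi>"
    have rng: "\<phi> ` {0..<b} \<subseteq> {0..<n}"
      and injp: "inj_on \<phi> {0..<b}"
      and edges: "\<forall>u v. {u, v} \<in> snd (Pmon b) \<longrightarrow> c {\<phi> u, \<phi> v} = 2"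
      using h unfolding embedding_in_color_def fstP by auto
    show False
    proof (cases "b = 1")
      case True
      then have "\<phi> 0 < n" using rng by auto
      then show False using n True by simp
    next
      case False
      then have kpos: "k > 0" using b k_def by simp
      have same: "\<phi> (i + 1) div k = \<phi> i div k" if i: "i + 1 < b" for i
      proof -
        have "{i, i + 1} \<in> snd (Pmon b)" using i by (auto simp: Pmon_def)
        then have "c {\<phi> i, \<phi> (i + 1)} = 2" using edges by blast
        then have "card ((\<lambda>x. x div k) ` {\<phi> i, \<phi> (i + 1)}) = 1"
        proof (rule contrapos_pp)
          assume hc: "card ((\<lambda>x. x div k) ` {\<phi> i, \<phi> (i + 1)}) \<noteq> 1"
          have "c {\<phi> i, \<phi> (i + 1)} = 1" unfolding c_def by (rule if_not_P[OF hc])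
          then show "c {\<phi> i, \<phi> (i + 1)} \<noteq> 2" by simp
        qed
        then show ?thesis using blk_eq by metis
      qed
      have allsame: "i < b \<Longrightarrow> \<phi> i div k = \<phi> 0 div k" for i
      proof (induction i)
        case 0 then show ?case by simp
      next
        case (Suc i)
        then show ?case using same[of i] by simp
      qed
      have sub: "\<phi> ` {0..<b} \<subseteq> {\<phi> 0 div k * k..<\<phi> 0 div k * k + k}"
      proof
        fix x assume "x \<in> \<phi> ` {0..<b}"
        then obtain i where "i < b" "x = \<phi> i" by auto
        then show "x \<in> {\<phi> 0 div k * k..<\<phi> 0 div k * k + k}"
          using in_block[OF allsame kpos] by simp
      qed
      have "card (\<phi> ` {0..<b}) \<le> card {\<phi> 0 div k * k..<\<phi> 0 div k * k + k}"
        by (rule card_mono[OF _ sub]) simp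
      moreover have "card (\<phi> ` {0..<b}) = b" using card_image[OF injp] by simp
      ultimately show False using k_def b by simp
    qed
  qed
  show ?thesis unfolding cyc_ramsey_prop_def using tc noC noP by blast
qed

theorem theorem4p12:
  fixes a b :: nat
  assumes "a \<ge> 2" and "b \<ge> 1"
  shows "R_cyc (Cmon a) (Pmon b) = 1 + (a - 1) * (b - 1)"
  unfolding R_cyc_def
proof (rule Least_equality)
  show "cyc_ramsey_prop (Cmon a) (Pmon b) (1 + (a - 1) * (b - 1))"
    using upper[OF assms] .
  fix y assume "cyc_ramsey_prop (Cmon a) (Pmon b) y"
  then show "1 + (a - 1) * (b - 1) \<le> y"
    using lower[OF assms, of y] by (meson not_le)
qed

end
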